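(* Let $K$ be an algebraically closed field of characteristic zero, $\deg_1$ a positive weighted homogeneous degree on $K[x_1,\dots,x_n]$, and $R\in K[x_1,\dots,x_n]\setminus K$ an irreducible $\deg_1$-homogeneous polynomial. If there exists a nonzero locally nilpotent derivation $D$ of $K[x_1,\dots,x_n]$ with $D(R)=0$, then the quotient ring $K[x_1,\dots,x_n]/(R)$ admits a nonzero weighted homogeneous locally nilpotent derivation.
   Context: A p.w.h. degree assigns positive real weights to the variables; the quotient is graded accordingly, and a derivation is weighted homogeneous (of degree $r$) if it maps homogeneous elements of degree $m$ to homogeneous elements of degree $m+r$. *)

theory Defs
  imports "HOL-Library.Poly_Mapping" "HOL-Computational_Algebra.Polynomial"
begin

type_synonym ('n, 'k) mpoly = "('n \<Rightarrow>\<^sub>0 nat) \<Rightarrow>\<^sub>0 'k"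

definition alg_closed :: "'k::field itself \<Rightarrow> bool" where
  "alg_closed _ \<longleftrightarrow> (\<forall>p :: 'k poly. degree p > 0 \<longrightarrow> (\<exists>x. poly p x = 0))"

definition const :: "'k::zero \<Rightarrow> ('n, 'k) mpoly" where
  "const c = Poly_Mapping.single 0 c"

definition pos_weights :: "('n \<Rightarrow> real) \<Rightarrow> bool" where
  "pos_weights w \<longleftrightarrow> (\<forall>i. w i > 0)"

definition wdeg :: "('n::finite \<Rightarrow> real) \<Rightarrow> ('n \<Rightarrow>\<^sub>0 nat) \<Rightarrow> real" where
  "wdeg w m = (\<Sum>i\<in>UNIV. w i * real (Poly_Mapping.lookup m i))"

definition whomog :: "('n::finite \<Rightarrow> real) \<Rightarrow> real \<Rightarrow> ('n, 'k::zero) mpoly \<Rightarrow> bool" where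
  "whomog w d p \<longleftrightarrow> (\<forall>m\<in>Poly_Mapping.keys p. wdeg w m = d)"

definition is_derivation :: "(('n, 'k::comm_ring_1) mpoly \<Rightarrow> ('n, 'k) mpoly) \<Rightarrow> bool" where
  "is_derivation D \<longleftrightarrow>
     (\<forall>f g. D (f + g) = D f + D g) \<and>
     (\<forall>c f. D (const c * f) = const c * D f) \<and>
     (\<forall>f g. D (f * g) = f * D g + g * D f)"

definition locally_nilpotent :: "('a \<Rightarrow> 'a::zero) \<Rightarrow> bool" where
  "locally_nilpotent D \<longleftrightarrow> (\<forall>f. \<exists>k. (D ^^ k) f = 0)"

definition cls :: "'a::comm_ring_1 \<Rightarrow> 'a \<Rightarrow> 'a set" where
  "cls R f = {f + R * h | h. True}"

definition quot :: "'a::comm_ring_1 \<Rightarrow> 'a set set" where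
  "quot R = range (cls R)"

definition qadd :: "'a::comm_ring_1 \<Rightarrow> 'a set \<Rightarrow> 'a set \<Rightarrow> 'a set" where
  "qadd R X Y = cls R ((SOME x. x \<in> X) + (SOME y. y \<in> Y))"

definition qmul :: "'a::comm_ring_1 \<Rightarrow> 'a set \<Rightarrow> 'a set \<Rightarrow> 'a set" where
  "qmul R X Y = cls R ((SOME x. x \<in> X) * (SOME y. y \<in> Y))"

definition qscale :: "('n, 'k::comm_ring_1) mpoly \<Rightarrow> 'k \<Rightarrow> ('n, 'k) mpoly set \<Rightarrow> ('n, 'k) mpoly set" where
  "qscale R c X = cls R (const c * (SOME x. x \<in> X))"

definition is_qderivation :: "('n, 'k::comm_ring_1) mpoly \<Rightarrow> (('n, 'k) mpoly set \<Rightarrow> ('n, 'k) mpoly set) \<Rightarrow> bool" where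
  "is_qderivation R d \<longleftrightarrow>
     (\<forall>X\<in>quot R. d X \<in> quot R) \<and>
     (\<forall>X\<in>quot R. \<forall>Y\<in>quot R. d (qadd R X Y) = qadd R (d X) (d Y)) \<and>
     (\<forall>c. \<forall>X\<in>quot R. d (qscale R c X) = qscale R c (d X)) \<and>
     (\<forall>X\<in>quot R. \<forall>Y\<in>quot R. d (qmul R X Y) = qadd R (qmul R X (d Y)) (qmul R Y (d X)))"

definition q_locally_nilpotent :: "('n, 'k::comm_ring_1) mpoly \<Rightarrow> (('n, 'k) mpoly set \<Rightarrow> ('n, 'k) mpoly set) \<Rightarrow> bool" where
  "q_locally_nilpotent R d \<longleftrightarrow> (\<forall>X\<in>quot R. \<exists>k. (d ^^ k) X = cls R 0)"

definition qhomog :: "('n::finite \<Rightarrow> real) \<Rightarrow> ('n, 'k::comm_ring_1) mpoly \<Rightarrow> real \<Rightarrow> ('n, 'k) mpoly set \<Rightarrow> bool" where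
  "qhomog w R m X \<longleftrightarrow> (\<exists>p. whomog w m p \<and> X = cls R p)"

definition q_whomog_derivation :: "('n::finite \<Rightarrow> real) \<Rightarrow> ('n, 'k::comm_ring_1) mpoly \<Rightarrow> (('n, 'k) mpoly set \<Rightarrow> ('n, 'k) mpoly set) \<Rightarrow> bool" where
  "q_whomog_derivation w R d \<longleftrightarrow>
     (\<exists>r::real. \<forall>m X. qhomog w R m X \<longrightarrow> qhomog w R (m + r) (d X))"

end

theory Submission
  imports Defs
begin

lemma wdeg_add: "wdeg w (a + b) = wdeg w a + wdeg w b"
  unfolding wdeg_def by (simp add: lookup_add algebra_simps sum.distrib)

lemma wdeg_zero[simp]: "wdeg w 0 = 0"
  unfolding wdeg_def by simp

lemma wdeg_single: "wdeg w (Poly_Mapping.single (i::'n::finite) 1) = w i"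
proof -
  have "wdeg w (Poly_Mapping.single i 1) = (\<Sum>j\<in>UNIV. if j = i then w i else 0)"
    unfolding wdeg_def by (rule sum.cong) (auto simp: lookup_single when_def)
  also have "\<dots> = w i" by simp
  finally show ?thesis .
qed

lemma wdeg_nonneg: "pos_weights w \<Longrightarrow> wdeg w m \<ge> 0"
  unfolding wdeg_def pos_weights_def by (intro sum_nonneg) (simp add: less_imp_le)

lemma wdeg_pos: assumes "pos_weights w" "m \<noteq> 0" shows "wdeg w m > 0"
proof -
  obtain i where "Poly_Mapping.lookup m i \<noteq> 0" using assms(2) poly_mapping_eqI[of m 0] by auto
  then show ?thesis using assms(1) unfolding wdeg_def pos_weights_def
    by (intro sum_pos2[of UNIV i]) (auto simp: less_imp_le)
qed

lemma lookup_const_mult: "Poly_Mapping.lookup (const c * p) m = c * Poly_Mapping.lookup p m"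
proof -
  have "const c * p = Poly_Mapping.map ((*) c) p"
    unfolding const_def by (simp add: mult_map_scale_conv_mult)
  then show ?thesis by (simp add: map.rep_eq when_def)
qed

lemma single_as_const: "Poly_Mapping.single m c = const c * Poly_Mapping.single m (1::'k::comm_ring_1)"
  unfolding const_def by (simp add: mult_single)

lemma const_0[simp]: "const 0 = 0" unfolding const_def by simp
lemma const_1: "const 1 = 1" unfolding const_def by simp

lemma poly_expand: "p = (\<Sum>m\<in>Poly_Mapping.keys p. Poly_Mapping.single m (Poly_Mapping.lookup p m))"
  by (rule poly_mapping_eqI)
     (auto simp: lookup_sum lookup_single when_def in_keys_iff sum.delta)

lemma mono_induct:
  assumes "P 0" "\<And>m i. P m \<Longrightarrow> P (m + Poly_Mapping.single i 1)"
  shows "P (m::'n::finite \<Rightarrow>\<^sub>0 nat)"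
proof -
  have "\<And>m. sum (Poly_Mapping.lookup m) UNIV = N \<Longrightarrow> P m" for N
  proof (induction N)
    case 0
    then have "m = 0" by (intro poly_mapping_eqI) simp
    then show ?case using assms(1) by simp
  next
    case (Suc N m)
    then obtain i where i: "Poly_Mapping.lookup m i > 0"
      by (metis gr0I sum.neutral nat.distinct(1))
    define m' where "m' = m - Poly_Mapping.single i 1"
    have lm': "Poly_Mapping.lookup m' j = Poly_Mapping.lookup m j - (if i = j then 1 else 0)" for j
      unfolding m'_def by (simp add: lookup_minus lookup_single when_def)
    have meq: "m = m' + Poly_Mapping.single i 1"
      by (rule poly_mapping_eqI) (use i in \<open>auto simp: lookup_add lm' lookup_single when_def\<close>)
    have "sum (Poly_Mapping.lookup m) UNIV = sum (Poly_Mapping.lookup m') UNIV + sum (Poly_Mapping.lookup (Poly_Mapping.single i 1)) UNIV"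
      by (subst meq) (simp add: lookup_add sum.distrib)
    also have "sum (Poly_Mapping.lookup (Poly_Mapping.single i (1::nat))) UNIV = 1"
      by (simp add: lookup_single when_def)
    finally have "sum (Poly_Mapping.lookup m') UNIV = N" using Suc.prems by simp
    then have "P m'" by (rule Suc.IH)
    then show ?case using assms(2) meq by simp
  qed
  then show ?thesis by blast
qed

definition wcomp :: "('n::finite \<Rightarrow> real) \<Rightarrow> real \<Rightarrow> ('n, 'k::zero) mpoly \<Rightarrow> ('n, 'k) mpoly" where
  "wcomp w d p = Abs_poly_mapping (\<lambda>m. if wdeg w m = d then Poly_Mapping.lookup p m else 0)"

lemma lookup_comp: "Poly_Mapping.lookup (wcomp w d p) m = (if wdeg w m = d then Poly_Mapping.lookup p m else 0)"
proof -
  have "finite {m. (if wdeg w m = d then Poly_Mapping.lookup p m else 0) \<noteq> 0}"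
    by (rule finite_subset[of _ "Poly_Mapping.keys p"]) (auto simp: in_keys_iff)
  then show ?thesis unfolding wcomp_def by simp
qed

lemma keys_comp: "Poly_Mapping.keys (wcomp w d p) = {m \<in> Poly_Mapping.keys p. wdeg w m = d}"
  by (auto simp: in_keys_iff lookup_comp split: if_splits)

lemma whomog_comp: "whomog w d (wcomp w d p)"
  unfolding whomog_def keys_comp by auto

lemma whomog_0[simp]: "whomog w d 0"
  unfolding whomog_def by simp

lemma comp_add: "wcomp w d (p + q) = wcomp w d p + wcomp w d (q::('n::finite,'k::comm_monoid_add) mpoly)"
  by (rule poly_mapping_eqI) (simp add: lookup_comp lookup_add)

lemma comp_diff: "wcomp w d (p - q) = wcomp w d p - wcomp w d (q::('n::finite,'k::ab_group_add) mpoly)"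
  by (rule poly_mapping_eqI) (simp add: lookup_comp lookup_minus)

lemma comp_0[simp]: "wcomp w d 0 = 0"
  by (rule poly_mapping_eqI) (simp add: lookup_comp)

lemma comp_sum: "wcomp w d (sum f A) = (\<Sum>a\<in>A. wcomp w d (f a :: ('n::finite,'k::comm_monoid_add) mpoly))"
  by (rule poly_mapping_eqI) (simp add: lookup_comp lookup_sum)

lemma comp_id: "whomog w d p \<Longrightarrow> wcomp w d p = p"
  by (rule poly_mapping_eqI) (auto simp: lookup_comp whomog_def in_keys_iff)

lemma comp_vanish: "(\<And>m. m \<in> Poly_Mapping.keys p \<Longrightarrow> wdeg w m \<noteq> d) \<Longrightarrow> wcomp w d p = 0"
  by (rule poly_mapping_eqI) (auto simp: lookup_comp in_keys_iff)

lemma comp_const: "wcomp w d (const c * p) = const c * wcomp w d (p::('n::finite,'k::comm_ring_1) mpoly)"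
  by (rule poly_mapping_eqI) (simp add: lookup_comp lookup_const_mult)

lemma whomog_mult:
  assumes "whomog w a p" "whomog w b (q::('n::{finite,linorder},'k::comm_ring_1) mpoly)"
  shows "whomog w (a + b) (p * q)"
  unfolding whomog_def
proof
  fix m assume "m \<in> Poly_Mapping.keys (p * q)"
  then obtain x y where "x \<in> Poly_Mapping.keys p" "y \<in> Poly_Mapping.keys q" "m = x + y"
    using keys_mult by blast
  then show "wdeg w m = a + b" using assms by (simp add: whomog_def wdeg_add)
qed

lemma whomog_const: "whomog w d p \<Longrightarrow> whomog w d (const c * (p::('n::finite,'k::comm_ring_1) mpoly))"
  unfolding whomog_def by (auto simp: in_keys_iff lookup_const_mult)

lemma comp_mult_hom:
  fixes R g :: "('n::{finite,linorder},'k::comm_ring_1) mpoly"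
  assumes "whomog w e R"
  shows "wcomp w (a + e) (R * g) = R * wcomp w a g"
proof -
  define h where "h = g - wcomp w a g"
  have g: "g = wcomp w a g + h" unfolding h_def by simp
  have kh: "m \<in> Poly_Mapping.keys h \<Longrightarrow> wdeg w m \<noteq> a" for m
    unfolding h_def by (auto simp: in_keys_iff lookup_minus lookup_comp)
  have 1: "wcomp w (a + e) (R * wcomp w a g) = R * wcomp w a g"
    by (rule comp_id) (metis add.commute assms whomog_comp whomog_mult)
  have 2: "wcomp w (a + e) (R * h) = 0"
  proof (rule comp_vanish)
    fix m assume "m \<in> Poly_Mapping.keys (R * h)"
    then obtain x y where "x \<in> Poly_Mapping.keys R" "y \<in> Poly_Mapping.keys h" "m = x + y"
      using keys_mult by blast
    then show "wdeg w m \<noteq> a + e" using assms kh by (auto simp: whomog_def wdeg_add)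
  qed
  have "R * g = R * wcomp w a g + R * h" by (subst g) (simp add: distrib_left)
  then show ?thesis using 1 2 by (simp add: comp_add)
qed

abbreviation xv :: "'n \<Rightarrow> ('n, 'k::{zero,one}) mpoly" where
  "xv i \<equiv> Poly_Mapping.single (Poly_Mapping.single i 1) 1"

type_synonym ('n,'k) der = "('n, 'k) mpoly \<Rightarrow> ('n, 'k) mpoly"

lemma wdeg_single': "wdeg w (Poly_Mapping.single (i::'n::finite) (Suc 0)) = w i"
  using wdeg_single[of w i] by simp

lemma der_add: "is_derivation D \<Longrightarrow> D (f + g) = D f + D g"
  unfolding is_derivation_def by blast
lemma der_cmul: "is_derivation D \<Longrightarrow> D (const c * f) = const c * D f"
  unfolding is_derivation_def by blast
lemma der_mult: "is_derivation D \<Longrightarrow> D (f * g) = f * D g + g * D f"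
  unfolding is_derivation_def by blast

lemma der_0: "is_derivation D \<Longrightarrow> D 0 = 0"
  using der_add[of D 0 0] by simp

lemma der_minus: "is_derivation D \<Longrightarrow> D (- f) = - D f"
proof -
  assume d: "is_derivation D"
  have "D f + D (- f) = 0" using der_add[OF d, of f "-f"] der_0[OF d] by simp
  then show ?thesis by (simp add: add_eq_0_iff2)
qed

lemma der_diff: "is_derivation D \<Longrightarrow> D (f - g) = D f - D g"
  using der_add[of D f "-g"] der_minus[of D g] by simp

lemma der_sum: "is_derivation D \<Longrightarrow> D (sum f A) = (\<Sum>a\<in>A. D (f a))"
  by (induction A rule: infinite_finite_induct) (auto simp: der_0 der_add)

lemma der_1: "is_derivation D \<Longrightarrow> D 1 = 0"
  using der_mult[of D 1 1] by simp

lemma der_const: "is_derivation D \<Longrightarrow> D (const c) = 0"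
  using der_cmul[of D c 1] der_1[of D] by simp

lemma der_single: "is_derivation D \<Longrightarrow> D (Poly_Mapping.single m c) = const c * D (Poly_Mapping.single m 1)"
  by (subst single_as_const) (rule der_cmul)

lemma der_expand: "is_derivation D \<Longrightarrow>
   D p = (\<Sum>m\<in>Poly_Mapping.keys p. const (Poly_Mapping.lookup p m) * D (Poly_Mapping.single m 1))"
proof -
  assume d: "is_derivation D"
  have "D p = D (\<Sum>m\<in>Poly_Mapping.keys p. Poly_Mapping.single m (Poly_Mapping.lookup p m))"
    by (subst poly_expand) (rule refl)
  also have "\<dots> = (\<Sum>m\<in>Poly_Mapping.keys p. D (Poly_Mapping.single m (Poly_Mapping.lookup p m)))"
    by (rule der_sum[OF d])
  also have "\<dots> = (\<Sum>m\<in>Poly_Mapping.keys p. const (Poly_Mapping.lookup p m) * D (Poly_Mapping.single m 1))"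
    by (rule sum.cong) (auto intro: der_single[OF d])
  finally show ?thesis .
qed

lemma der_R: "is_derivation D \<Longrightarrow> D R = 0 \<Longrightarrow> D (R * f) = R * D f"
  using der_mult[of D R f] by simp

lemma der_Rpow: "is_derivation D \<Longrightarrow> D R = 0 \<Longrightarrow> D (R ^ k) = 0"
  by (induction k) (auto simp: der_1 der_R)

lemma mono_step: "Poly_Mapping.single (m + Poly_Mapping.single i 1) (1::'k::comm_ring_1) =
   Poly_Mapping.single m 1 * xv i"
  by (simp add: mult_single)

lemma der_dvd:
  fixes D :: "('n::{finite}, 'k::comm_ring_1) der"
  assumes d: "is_derivation D" and v: "\<And>i. R dvd D (xv i)"
  shows "R dvd D p"
proof -
  have mon: "R dvd D (Poly_Mapping.single m 1)" for m
  proof (induction m rule: mono_induct)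
    case 1 then show ?case using der_1[OF d] by simp
  next
    case (2 m i)
    then show ?case unfolding mono_step der_mult[OF d] using v by simp
  qed
  show ?thesis by (subst der_expand[OF d]) (auto intro!: dvd_sum simp: mon)
qed

lemma keys_const_mult: "Poly_Mapping.keys (const c * p) \<subseteq> Poly_Mapping.keys p"
  by (auto simp: in_keys_iff lookup_const_mult)

lemma keys_single_mult: "k \<in> Poly_Mapping.keys (Poly_Mapping.single m c * q) \<Longrightarrow> \<exists>y\<in>Poly_Mapping.keys q. k = m + y"
  using keys_mult[of "Poly_Mapping.single m c" q] by (auto split: if_splits)

lemma der_bound:
  fixes D :: "('n::{finite}, 'k::comm_ring_1) der"
  assumes d: "is_derivation D"
    and v: "\<And>i k. k \<in> Poly_Mapping.keys (D (xv i)) \<Longrightarrow> wdeg w k \<le> w i + r"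
    and k: "k \<in> Poly_Mapping.keys (D p)"
  shows "\<exists>m\<in>Poly_Mapping.keys p. wdeg w k \<le> wdeg w m + r"
proof -
  have mon: "\<forall>k\<in>Poly_Mapping.keys (D (Poly_Mapping.single m 1)). wdeg w k \<le> wdeg w m + r" for m
  proof (induction m rule: mono_induct)
    case 1 then show ?case using der_1[OF d] by simp
  next
    case (2 m i)
    show ?case
    proof
      fix k assume "k \<in> Poly_Mapping.keys (D (Poly_Mapping.single (m + Poly_Mapping.single i 1) 1))"
      then have "k \<in> Poly_Mapping.keys (Poly_Mapping.single m 1 * D (xv i) + xv i * D (Poly_Mapping.single m 1))"
        unfolding mono_step der_mult[OF d] .
      then have "k \<in> Poly_Mapping.keys (Poly_Mapping.single m 1 * D (xv i)) \<or>
                 k \<in> Poly_Mapping.keys (xv i * D (Poly_Mapping.single m 1))"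
        using keys_add[of "Poly_Mapping.single m 1 * D (xv i)" "xv i * D (Poly_Mapping.single m 1)"] by (meson UnE subsetD)
      then show "wdeg w k \<le> wdeg w (m + Poly_Mapping.single i 1) + r"
      proof
        assume "k \<in> Poly_Mapping.keys (Poly_Mapping.single m 1 * D (xv i))"
        then obtain y where "y \<in> Poly_Mapping.keys (D (xv i))" "k = m + y"
          using keys_single_mult by blast
        then show ?thesis using v[of y i] by (simp add: wdeg_add wdeg_single')
      next
        assume "k \<in> Poly_Mapping.keys (xv i * D (Poly_Mapping.single m 1))"
        then obtain y where "y \<in> Poly_Mapping.keys (D (Poly_Mapping.single m 1))" "k = Poly_Mapping.single i 1 + y"
          using keys_single_mult by blast
        then show ?thesis using 2 by (auto simp: wdeg_add wdeg_single')
      qed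
    qed
  qed
  have e: "D p = (\<Sum>m\<in>Poly_Mapping.keys p. const (Poly_Mapping.lookup p m) * D (Poly_Mapping.single m 1))"
    by (rule der_expand[OF d])
  have "k \<in> (\<Union>m\<in>Poly_Mapping.keys p. Poly_Mapping.keys (const (Poly_Mapping.lookup p m) * D (Poly_Mapping.single m 1)))"
    using k unfolding e by (rule subsetD[OF keys_sum])
  then obtain m where "m \<in> Poly_Mapping.keys p" "k \<in> Poly_Mapping.keys (const (Poly_Mapping.lookup p m) * D (Poly_Mapping.single m 1))"
    by blast
  then have "k \<in> Poly_Mapping.keys (D (Poly_Mapping.single m 1))" using keys_const_mult by (metis subsetD)
  with mon \<open>m \<in> Poly_Mapping.keys p\<close> show ?thesis by blast
qed

definition Dh :: "('n::finite \<Rightarrow> real) \<Rightarrow> real \<Rightarrow> ('n, 'k::comm_ring_1) der \<Rightarrow> ('n, 'k) der" where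
  "Dh w r D p = (\<Sum>m\<in>Poly_Mapping.keys p. wcomp w (wdeg w m + r) (D (Poly_Mapping.single m (Poly_Mapping.lookup p m))))"

lemma whomog_single: "whomog w (wdeg w m) (Poly_Mapping.single m c)"
  unfolding whomog_def by simp

lemma whomog_xv: "whomog w (w i) (xv i :: ('n::finite,'k::{zero,one}) mpoly)"
  using whomog_single[of w "Poly_Mapping.single i 1" 1] by (simp add: wdeg_single')

lemma Dh_hom:
  assumes d: "is_derivation D" and h: "whomog w e p"
  shows "Dh w r D p = wcomp w (e + r) (D p)"
proof -
  have "Dh w r D p = (\<Sum>m\<in>Poly_Mapping.keys p. wcomp w (e + r) (D (Poly_Mapping.single m (Poly_Mapping.lookup p m))))"
    unfolding Dh_def by (rule sum.cong) (use h in \<open>auto simp: whomog_def\<close>)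
  also have "\<dots> = wcomp w (e + r) (D (\<Sum>m\<in>Poly_Mapping.keys p. Poly_Mapping.single m (Poly_Mapping.lookup p m)))"
    by (simp add: comp_sum der_sum[OF d])
  also have "\<dots> = wcomp w (e + r) (D p)" by (subst (2) poly_expand) (rule refl)
  finally show ?thesis .
qed

lemma Dh_superset:
  assumes d: "is_derivation D" and S: "finite S" "Poly_Mapping.keys p \<subseteq> S"
  shows "Dh w r D p = (\<Sum>m\<in>S. wcomp w (wdeg w m + r) (D (Poly_Mapping.single m (Poly_Mapping.lookup p m))))"
  unfolding Dh_def
  by (rule sum.mono_neutral_left) (use S in \<open>auto simp: in_keys_iff der_0[OF d]\<close>)

lemma Dh_add:
  assumes d: "is_derivation D"
  shows "Dh w r D (p + q) = Dh w r D p + Dh w r D q"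
proof -
  let ?S = "Poly_Mapping.keys p \<union> Poly_Mapping.keys q"
  have "Dh w r D (p + q) = (\<Sum>m\<in>?S. wcomp w (wdeg w m + r) (D (Poly_Mapping.single m (Poly_Mapping.lookup (p + q) m))))"
    by (rule Dh_superset[OF d]) (use keys_add[of p q] in auto)
  also have "\<dots> = (\<Sum>m\<in>?S. wcomp w (wdeg w m + r) (D (Poly_Mapping.single m (Poly_Mapping.lookup p m)))
       + wcomp w (wdeg w m + r) (D (Poly_Mapping.single m (Poly_Mapping.lookup q m))))"
    by (rule sum.cong) (simp_all add: lookup_add single_add der_add[OF d] comp_add)
  also have "\<dots> = Dh w r D p + Dh w r D q"
    by (simp add: sum.distrib Dh_superset[OF d, of ?S p] Dh_superset[OF d, of ?S q])
  finally show ?thesis .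
qed

lemma Dh_0: "is_derivation D \<Longrightarrow> Dh w r D 0 = 0"
  unfolding Dh_def by simp

lemma Dh_cmul:
  assumes d: "is_derivation D"
  shows "Dh w r D (const c * p) = const c * Dh w r D p"
proof -
  have "Dh w r D (const c * p) = (\<Sum>m\<in>Poly_Mapping.keys p. wcomp w (wdeg w m + r) (D (Poly_Mapping.single m (Poly_Mapping.lookup (const c * p) m))))"
    by (rule Dh_superset[OF d]) (use keys_const_mult in auto)
  also have "\<dots> = (\<Sum>m\<in>Poly_Mapping.keys p. const c * wcomp w (wdeg w m + r) (D (Poly_Mapping.single m (Poly_Mapping.lookup p m))))"
  proof (rule sum.cong)
    fix m
    have "Poly_Mapping.single m (Poly_Mapping.lookup (const c * p) m) = const c * Poly_Mapping.single m (Poly_Mapping.lookup p m)"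
      unfolding const_def by (simp add: mult_single lookup_const_mult[unfolded const_def])
    then show "wcomp w (wdeg w m + r) (D (Poly_Mapping.single m (Poly_Mapping.lookup (const c * p) m))) =
      const c * wcomp w (wdeg w m + r) (D (Poly_Mapping.single m (Poly_Mapping.lookup p m)))"
      by (simp add: der_cmul[OF d] comp_const)
  qed simp
  also have "\<dots> = const c * Dh w r D p" by (simp add: Dh_def sum_distrib_left)
  finally show ?thesis .
qed

lemma additive_sum:
  assumes "\<And>x y. L (x + y) = L x + L y"
  shows "L (sum f A) = (\<Sum>a\<in>A. L (f a :: 'a::comm_monoid_add)) \<and> L 0 = (0::'b::cancel_comm_monoid_add)"
proof -
  have z: "L 0 = 0" using assms[of 0 0] by simp
  have "L (sum f A) = (\<Sum>a\<in>A. L (f a))"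
    by (induction A rule: infinite_finite_induct) (auto simp: z assms)
  with z show ?thesis by simp
qed

lemma leibniz_ext:
  fixes L :: "('n::{finite,linorder}, 'k::comm_ring_1) der"
  assumes add: "\<And>x y. L (x + y) = L x + L y"
    and mon: "\<And>a b c c'. L (Poly_Mapping.single a c * Poly_Mapping.single b c') =
       Poly_Mapping.single a c * L (Poly_Mapping.single b c') + Poly_Mapping.single b c' * L (Poly_Mapping.single a c)"
  shows "L (f * g) = f * L g + g * L f"
proof -
  note ls = additive_sum[of L, OF add, THEN conjunct1]
  define sf where "sf a = Poly_Mapping.single a (Poly_Mapping.lookup f a)" for a
  define sg where "sg b = Poly_Mapping.single b (Poly_Mapping.lookup g b)" for b
  have f: "f = (\<Sum>a\<in>Poly_Mapping.keys f. sf a)" unfolding sf_def by (rule poly_expand)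
  have g: "g = (\<Sum>b\<in>Poly_Mapping.keys g. sg b)" unfolding sg_def by (rule poly_expand)
  have Lg: "L (\<Sum>b\<in>Poly_Mapping.keys g. sg b) = (\<Sum>b\<in>Poly_Mapping.keys g. L (sg b))" by (rule ls)
  have Lf: "L (\<Sum>a\<in>Poly_Mapping.keys f. sf a) = (\<Sum>a\<in>Poly_Mapping.keys f. L (sf a))" by (rule ls)
  have P: "(\<Sum>a\<in>Poly_Mapping.keys f. sf a) * (\<Sum>b\<in>Poly_Mapping.keys g. sg b) = (\<Sum>a\<in>Poly_Mapping.keys f. \<Sum>b\<in>Poly_Mapping.keys g. sf a * sg b)"
    by (rule sum_product)
  have "f * g = (\<Sum>a\<in>Poly_Mapping.keys f. \<Sum>b\<in>Poly_Mapping.keys g. sf a * sg b)"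
    using P unfolding f[symmetric] g[symmetric] .
  then have "L (f * g) = (\<Sum>a\<in>Poly_Mapping.keys f. \<Sum>b\<in>Poly_Mapping.keys g. sf a * L (sg b) + sg b * L (sf a))"
    by (simp add: ls mon sf_def sg_def)
  also have "\<dots> = (\<Sum>a\<in>Poly_Mapping.keys f. sf a * (\<Sum>b\<in>Poly_Mapping.keys g. L (sg b)) + (\<Sum>b\<in>Poly_Mapping.keys g. sg b) * L (sf a))"
    by (simp add: sum.distrib sum_distrib_left sum_distrib_right)
  also have "\<dots> = (\<Sum>a\<in>Poly_Mapping.keys f. sf a) * L (\<Sum>b\<in>Poly_Mapping.keys g. sg b)
       + (\<Sum>b\<in>Poly_Mapping.keys g. sg b) * (\<Sum>a\<in>Poly_Mapping.keys f. L (sf a))"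
    by (simp add: Lg sum.distrib sum_distrib_left sum_distrib_right sum.swap[of _ "Poly_Mapping.keys g"])
  also have "\<dots> = f * L g + g * L f"
    unfolding Lf[symmetric] f[symmetric] g[symmetric] by (rule refl)
  finally show ?thesis .
qed

lemma Dh_mon:
  fixes D :: "('n::{finite,linorder}, 'k::comm_ring_1) der"
  assumes d: "is_derivation D"
  shows "Dh w r D (Poly_Mapping.single a c * Poly_Mapping.single b c') =
       Poly_Mapping.single a c * Dh w r D (Poly_Mapping.single b c') + Poly_Mapping.single b c' * Dh w r D (Poly_Mapping.single a c)"
proof -
  let ?A = "wdeg w a" and ?B = "wdeg w b"
  let ?sa = "Poly_Mapping.single a c" and ?sb = "Poly_Mapping.single b c'"
  have "Dh w r D (?sa * ?sb) = wcomp w (?A + ?B + r) (D (?sa * ?sb))"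
    by (rule Dh_hom[OF d]) (intro whomog_mult whomog_single)
  also have "\<dots> = wcomp w ((?B + r) + ?A) (?sa * D ?sb) + wcomp w ((?A + r) + ?B) (?sb * D ?sa)"
    by (simp add: der_mult[OF d] comp_add algebra_simps)
  also have "\<dots> = ?sa * wcomp w (?B + r) (D ?sb) + ?sb * wcomp w (?A + r) (D ?sa)"
    by (simp add: comp_mult_hom whomog_single)
  also have "\<dots> = ?sa * Dh w r D ?sb + ?sb * Dh w r D ?sa"
    by (simp add: Dh_hom[OF d whomog_single])
  finally show ?thesis .
qed

lemma Dh_der:
  fixes D :: "('n::{finite,linorder}, 'k::comm_ring_1) der"
  assumes d: "is_derivation D"
  shows "is_derivation (Dh w r D)"
  unfolding is_derivation_def
  using Dh_add[OF d] Dh_cmul[OF d] leibniz_ext[of "Dh w r D", OF Dh_add[OF d] Dh_mon[OF d]] by blast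

lemma Dh_whomog: "is_derivation D \<Longrightarrow> whomog w e p \<Longrightarrow> whomog w (e + r) (Dh w r D p)"
  by (simp add: Dh_hom whomog_comp)

lemma Dh_R: "is_derivation D \<Longrightarrow> D R = 0 \<Longrightarrow> whomog w e R \<Longrightarrow> Dh w r D R = 0"
  by (simp add: Dh_hom)

lemma Dh_iter:
  fixes D :: "('n::{finite,linorder}, 'k::comm_ring_1) der"
  assumes d: "is_derivation D"
    and v: "\<And>i k. k \<in> Poly_Mapping.keys (D (xv i)) \<Longrightarrow> wdeg w k \<le> w i + r"
    and h: "whomog w A s"
  shows "(\<forall>x\<in>Poly_Mapping.keys ((D^^k) s). wdeg w x \<le> A + real k * r) \<and>
         (Dh w r D ^^ k) s = wcomp w (A + real k * r) ((D^^k) s)"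
proof (induction k)
  case 0
  then show ?case using h by (simp add: whomog_def comp_id)
next
  case (Suc k)
  define g where "g = (D^^k) s"
  have kg: "\<forall>x\<in>Poly_Mapping.keys g. wdeg w x \<le> A + real k * r" and
       dg: "(Dh w r D ^^ k) s = wcomp w (A + real k * r) g"
    using Suc.IH unfolding g_def by auto
  have 1: "\<forall>x\<in>Poly_Mapping.keys (D g). wdeg w x \<le> A + real (Suc k) * r"
  proof
    fix x assume "x \<in> Poly_Mapping.keys (D g)"
    then obtain m where "m \<in> Poly_Mapping.keys g" "wdeg w x \<le> wdeg w m + r"
      using der_bound[OF d v] by blast
    then show "wdeg w x \<le> A + real (Suc k) * r" using kg by (force simp: algebra_simps)
  qed
  have 2: "wcomp w (A + real k * r + r) (D (g - wcomp w (A + real k * r) g)) = 0"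
  proof (rule comp_vanish)
    fix x assume "x \<in> Poly_Mapping.keys (D (g - wcomp w (A + real k * r) g))"
    then obtain m where m: "m \<in> Poly_Mapping.keys (g - wcomp w (A + real k * r) g)" "wdeg w x \<le> wdeg w m + r"
      using der_bound[OF d v] by blast
    from m(1) have "m \<in> Poly_Mapping.keys g" "wdeg w m \<noteq> A + real k * r"
      by (auto simp: in_keys_iff lookup_minus lookup_comp split: if_splits)
    with kg m(2) show "wdeg w x \<noteq> A + real k * r + r" by force
  qed
  have "(Dh w r D ^^ Suc k) s = Dh w r D (wcomp w (A + real k * r) g)" using dg by simp
  also have "\<dots> = wcomp w (A + real k * r + r) (D (wcomp w (A + real k * r) g))"
    by (rule Dh_hom[OF d whomog_comp])
  also have "\<dots> = wcomp w (A + real k * r + r) (D g)"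
  proof -
    have "D g = D (wcomp w (A + real k * r) g) + D (g - wcomp w (A + real k * r) g)"
      by (simp add: der_add[OF d, symmetric])
    then show ?thesis using 2 by (simp add: comp_add)
  qed
  also have "\<dots> = wcomp w (A + real (Suc k) * r) ((D ^^ Suc k) s)"
    by (simp add: g_def algebra_simps)
  finally show ?case using 1 by (simp add: g_def)
qed

lemma funpow_additive:
  fixes L :: "'a::cancel_comm_monoid_add \<Rightarrow> 'a"
  assumes "\<And>x y. L (x + y) = L x + L y"
  shows "(L ^^ k) (x + y) = (L ^^ k) x + (L ^^ k) (y :: 'a :: cancel_comm_monoid_add)"
  by (induction k arbitrary: x y) (simp_all add: assms)

lemma funpow_zero:
  fixes L :: "'a::cancel_comm_monoid_add \<Rightarrow> 'a"
  assumes "\<And>x y. L (x + y) = L x + L y"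
  shows "(L ^^ k) 0 = (0 :: 'a :: cancel_comm_monoid_add)"
  using funpow_additive[OF assms, of k 0 0] by simp

lemma lnd_mono:
  fixes L :: "('n::finite, 'k::comm_ring_1) der"
  assumes add: "\<And>x y. L (x + y) = L x + L y"
    and mon: "\<And>m c. \<exists>k. (L ^^ k) (Poly_Mapping.single m c) = 0"
  shows "locally_nilpotent L"
  unfolding locally_nilpotent_def
proof
  fix p
  obtain kf where kf: "\<And>m c. (L ^^ kf m c) (Poly_Mapping.single m c) = 0" using mon by metis
  define K where "K = Max (insert 0 ((\<lambda>m. kf m (Poly_Mapping.lookup p m)) ` Poly_Mapping.keys p))"
  have big: "(L ^^ K) (Poly_Mapping.single m (Poly_Mapping.lookup p m)) = 0" if "m \<in> Poly_Mapping.keys p" for m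
  proof -
    have "kf m (Poly_Mapping.lookup p m) \<le> K" unfolding K_def using that by simp
    then obtain j where "K = j + kf m (Poly_Mapping.lookup p m)" using le_Suc_ex by (metis add.commute)
    then show ?thesis by (simp add: funpow_add kf funpow_zero[OF add])
  qed
  have "(L ^^ K) p = (L ^^ K) (\<Sum>m\<in>Poly_Mapping.keys p. Poly_Mapping.single m (Poly_Mapping.lookup p m))"
    by (subst poly_expand) (rule refl)
  also have "\<dots> = (\<Sum>m\<in>Poly_Mapping.keys p. (L ^^ K) (Poly_Mapping.single m (Poly_Mapping.lookup p m)))"
    by (rule additive_sum[THEN conjunct1]) (rule funpow_additive[OF add])
  also have "\<dots> = 0" by (simp add: big)
  finally show "\<exists>k. (L ^^ k) p = 0" by blast
qed

lemma Dh_lnd: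
  fixes D :: "('n::{finite,linorder}, 'k::comm_ring_1) der"
  assumes d: "is_derivation D" and l: "locally_nilpotent D"
    and v: "\<And>i k. k \<in> Poly_Mapping.keys (D (xv i)) \<Longrightarrow> wdeg w k \<le> w i + r"
  shows "locally_nilpotent (Dh w r D)"
proof (rule lnd_mono)
  show "\<And>x y. Dh w r D (x + y) = Dh w r D x + Dh w r D y" by (rule Dh_add[OF d])
  fix m c
  obtain k where "(D ^^ k) (Poly_Mapping.single m c) = 0" using l unfolding locally_nilpotent_def by blast
  then show "\<exists>k. (Dh w r D ^^ k) (Poly_Mapping.single m c) = 0"
    using Dh_iter[OF d v whomog_single[of w m c], of k] by auto
qed

definition good :: "('n::finite \<Rightarrow> real) \<Rightarrow> ('n, 'k::comm_ring_1) mpoly \<Rightarrow> ('n, 'k) der \<Rightarrow> real \<Rightarrow> bool" where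
  "good w R E s \<longleftrightarrow> is_derivation E \<and> locally_nilpotent E \<and> E R = 0 \<and>
     (\<forall>d p. whomog w d p \<longrightarrow> whomog w (d + s) (E p))"

lemma divide_step:
  fixes R :: "('n::{finite,linorder}, 'k::idom) mpoly"
  assumes R0: "R \<noteq> 0" and hR: "whomog w e R" and g: "good w R E s"
    and all: "\<And>i. R dvd E (xv i)"
  shows "\<exists>E'. good w R E' (s - e) \<and> (\<forall>f. E f = R * E' f)"
proof -
  have d: "is_derivation E" and l: "locally_nilpotent E" and ER: "E R = 0"
    and hE: "\<And>d p. whomog w d p \<Longrightarrow> whomog w (d + s) (E p)"
    using g unfolding good_def by auto
  have dv: "R dvd E f" for f by (rule der_dvd[OF d all])
  have canc: "R * a = R * b \<Longrightarrow> a = b" for a b using R0 by simp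
  define E' where "E' f = (THE g. E f = R * g)" for f
  have E': "E f = R * E' f" for f
  proof -
    obtain g where g: "E f = R * g" using dv[of f] by (rule dvdE)
    have "\<exists>!g. E f = R * g"
    proof (rule ex1I)
      show "E f = R * g" by (rule g)
    next
      fix g' assume "E f = R * g'"
      then show "g' = g" using g canc by metis
    qed
    then show ?thesis unfolding E'_def by (rule theI')
  qed
  have d': "is_derivation E'"
    unfolding is_derivation_def
  proof (intro conjI allI)
    fix f g
    show "E' (f + g) = E' f + E' g"
      by (rule canc) (metis E' der_add[OF d] distrib_left)
    show "E' (f * g) = f * E' g + g * E' f"
      by (rule canc) (simp only: E'[symmetric] der_mult[OF d], simp add: E' algebra_simps)
  next
    fix c f
    show "E' (const c * f) = const c * E' f"
      by (rule canc) (simp only: E'[symmetric] der_cmul[OF d], simp add: E' algebra_simps)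
  qed
  have ER': "E' R = 0" using E'[of R] ER R0 by simp
  have pow: "(E ^^ k) f = R ^ k * (E' ^^ k) f" for k f
  proof (induction k)
    case 0 then show ?case by simp
  next
    case (Suc k)
    have "(E ^^ Suc k) f = E (R ^ k * (E' ^^ k) f)" using Suc by simp
    also have "\<dots> = R ^ k * E ((E' ^^ k) f)"
      using der_mult[OF d, of "R ^ k" "(E' ^^ k) f"] der_Rpow[OF d ER, of k] by simp
    also have "\<dots> = R ^ Suc k * (E' ^^ Suc k) f" by (simp add: E' algebra_simps)
    finally show ?case .
  qed
  have l': "locally_nilpotent E'"
    unfolding locally_nilpotent_def
  proof
    fix f
    obtain k where "(E ^^ k) f = 0" using l unfolding locally_nilpotent_def by blast
    then have "(E' ^^ k) f = 0" using pow[of k f] R0 by simp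
    then show "\<exists>k. (E' ^^ k) f = 0" by blast
  qed
  have h': "whomog w (d + (s - e)) (E' p)" if "whomog w d p" for d p
  proof -
    have hp: "whomog w (d + s) (E p)" by (rule hE[OF that])
    have "R * wcomp w (d + (s - e)) (E' p) = wcomp w (d + (s - e) + e) (R * E' p)"
      by (rule comp_mult_hom[OF hR, symmetric])
    also have "\<dots> = wcomp w (d + s) (E p)" by (simp add: E')
    also have "\<dots> = E p" by (rule comp_id[OF hp])
    also have "\<dots> = R * E' p" by (rule E')
    finally have "wcomp w (d + (s - e)) (E' p) = E' p" by (rule canc)
    then show ?thesis by (metis whomog_comp)
  qed
  have "good w R E' (s - e)" unfolding good_def using d' l' ER' h' by blast
  then show ?thesis using E' by blast
qed

lemma descent:
  fixes R :: "('n::{finite,linorder}, 'k::idom) mpoly"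
  assumes R0: "R \<noteq> 0" and hR: "whomog w e R" and pw: "pos_weights w" and e0: "e > 0"
  shows "good w R E s \<Longrightarrow> E (xv i) \<noteq> 0 \<Longrightarrow> w i + s < real n * e \<Longrightarrow>
     \<exists>F s'. good w R F s' \<and> (\<exists>j. \<not> R dvd F (xv j))"
proof (induction n arbitrary: E s)
  case 0
  have "whomog w (w i + s) (E (xv i))"
    using "0.prems"(1) whomog_xv[of w i] unfolding good_def by blast
  moreover obtain k where "k \<in> Poly_Mapping.keys (E (xv i))" using "0.prems"(2) by fastforce
  ultimately have "wdeg w k = w i + s" by (auto simp: whomog_def)
  with wdeg_nonneg[OF pw, of k] "0.prems"(3) show ?case by simp
next
  case (Suc n)
  show ?case
  proof (cases "\<exists>j. \<not> R dvd E (xv j)")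
    case True then show ?thesis using Suc.prems(1) by blast
  next
    case False
    then obtain E' where g': "good w R E' (s - e)" and EE: "\<forall>f. E f = R * E' f"
      using divide_step[OF R0 hR Suc.prems(1)] by blast
    have "E' (xv i) \<noteq> 0" using Suc.prems(2) EE by auto
    moreover have "w i + (s - e) < real n * e" using Suc.prems(3) by (simp add: algebra_simps)
    ultimately show ?thesis using Suc.IH[OF g'] by blast
  qed
qed

lemma mem_cls: "x \<in> cls R f \<longleftrightarrow> R dvd (x - f)"
  unfolding cls_def by (auto simp: dvd_def algebra_simps)

lemma cls_eq: "cls R f = cls R g \<longleftrightarrow> R dvd (f - g)"
proof
  assume "cls R f = cls R g"
  moreover have "f \<in> cls R f" by (simp add: mem_cls)
  ultimately show "R dvd (f - g)" by (simp add: mem_cls)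
next
  assume a: "R dvd (f - g)"
  show "cls R f = cls R g"
  proof (rule set_eqI)
    fix x
    have "x - g = (x - f) + (f - g)" by simp
    moreover have "x - f = (x - g) - (f - g)" by simp
    ultimately show "x \<in> cls R f \<longleftrightarrow> x \<in> cls R g"
      using a unfolding mem_cls by (metis dvd_add dvd_diff)
  qed
qed

lemma rep_cls: "R dvd ((SOME x. x \<in> cls R f) - f)"
proof -
  have "f \<in> cls R f" by (simp add: mem_cls)
  then have "(SOME x. x \<in> cls R f) \<in> cls R f" by (rule someI)
  then show ?thesis by (simp add: mem_cls)
qed

lemma qadd_cls: "qadd R (cls R f) (cls R g) = cls R (f + g)"
  unfolding qadd_def cls_eq
proof -
  have "(SOME x. x \<in> cls R f) + (SOME y. y \<in> cls R g) - (f + g) =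
        ((SOME x. x \<in> cls R f) - f) + ((SOME y. y \<in> cls R g) - g)" by (simp add: algebra_simps)
  then show "R dvd (SOME x. x \<in> cls R f) + (SOME y. y \<in> cls R g) - (f + g)"
    using rep_cls[of R f] rep_cls[of R g] by (metis dvd_add)
qed

lemma qmul_cls: "qmul R (cls R f) (cls R g) = cls R (f * g)"
  unfolding qmul_def cls_eq
proof -
  define x where "x = (SOME x. x \<in> cls R f)"
  define y where "y = (SOME y. y \<in> cls R g)"
  have "x * y - f * g = x * (y - g) + g * (x - f)" by (simp add: algebra_simps)
  moreover have "R dvd x - f" "R dvd y - g" unfolding x_def y_def by (rule rep_cls)+
  ultimately show "R dvd x * y - f * g" unfolding x_def y_def
    by (metis dvd_add dvd_mult)
qed

lemma qscale_cls: "qscale R c (cls R f) = cls R (const c * f)"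
  unfolding qscale_def cls_eq
proof -
  define x where "x = (SOME x. x \<in> cls R f)"
  have "const c * x - const c * f = const c * (x - f)" by (simp add: algebra_simps)
  moreover have "R dvd x - f" unfolding x_def by (rule rep_cls)
  ultimately show "R dvd const c * x - const c * f" unfolding x_def by (metis dvd_mult)
qed

lemma der_resp:
  assumes d: "is_derivation F" and FR: "F R = 0" and a: "R dvd (a - b)"
  shows "R dvd (F a - F b)"
proof -
  obtain h where h: "a - b = R * h" using a by (rule dvdE)
  have "F a - F b = F (a - b)" by (simp add: der_diff[OF d])
  also have "\<dots> = R * F h" using h der_R[OF d FR] by simp
  finally show ?thesis by simp
qed

definition qd :: "('n, 'k::comm_ring_1) mpoly \<Rightarrow> ('n, 'k) der \<Rightarrow> ('n, 'k) mpoly set \<Rightarrow> ('n, 'k) mpoly set" where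
  "qd R F X = cls R (F (SOME x. x \<in> X))"

lemma qd_cls:
  assumes d: "is_derivation F" and FR: "F R = 0"
  shows "qd R F (cls R f) = cls R (F f)"
  unfolding qd_def cls_eq by (rule der_resp[OF d FR rep_cls])

lemma qd_iter:
  assumes d: "is_derivation F" and FR: "F R = 0"
  shows "(qd R F ^^ k) (cls R f) = cls R ((F ^^ k) f)"
  by (induction k) (simp_all add: qd_cls[OF d FR])

lemma quot_cls: "X \<in> quot R \<Longrightarrow> \<exists>f. X = cls R f"
  unfolding quot_def by auto

lemma cls_quot: "cls R f \<in> quot R"
  unfolding quot_def by auto

lemma qd_good:
  fixes F :: "('n::{finite}, 'k::comm_ring_1) der"
  assumes d: "is_derivation F" and l: "locally_nilpotent F" and FR: "F R = 0"
    and h: "\<And>d p. whomog w d p \<Longrightarrow> whomog w (d + s) (F p)"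
    and j: "\<not> R dvd F (xv j)"
  shows "is_qderivation R (qd R F) \<and> q_locally_nilpotent R (qd R F) \<and> q_whomog_derivation w R (qd R F)
             \<and> (\<exists>X\<in>quot R. qd R F X \<noteq> cls R 0)"
proof (intro conjI)
  note qc = qd_cls[OF d FR]
  show "is_qderivation R (qd R F)"
    unfolding is_qderivation_def
  proof (intro conjI ballI allI)
    fix X assume "X \<in> quot R"
    then obtain f where "X = cls R f" using quot_cls by blast
    then show "qd R F X \<in> quot R" by (simp add: qc cls_quot)
  next
    fix X Y assume "X \<in> quot R" "Y \<in> quot R"
    then obtain f g where X: "X = cls R f" and Y: "Y = cls R g" using quot_cls by blast
    show "qd R F (qadd R X Y) = qadd R (qd R F X) (qd R F Y)"
      by (simp add: X Y qc qadd_cls der_add[OF d])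
    show "qd R F (qmul R X Y) = qadd R (qmul R X (qd R F Y)) (qmul R Y (qd R F X))"
      by (simp add: X Y qc qadd_cls qmul_cls der_mult[OF d])
  next
    fix c X assume "X \<in> quot R"
    then obtain f where X: "X = cls R f" using quot_cls by blast
    show "qd R F (qscale R c X) = qscale R c (qd R F X)"
      by (simp add: X qc qscale_cls der_cmul[OF d])
  qed
  show "q_locally_nilpotent R (qd R F)"
    unfolding q_locally_nilpotent_def
  proof
    fix X assume "X \<in> quot R"
    then obtain f where X: "X = cls R f" using quot_cls by blast
    obtain k where "(F ^^ k) f = 0" using l unfolding locally_nilpotent_def by blast
    then show "\<exists>k. (qd R F ^^ k) X = cls R 0" using qd_iter[OF d FR, of k f] X by auto
  qed
  show "q_whomog_derivation w R (qd R F)"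
    unfolding q_whomog_derivation_def
  proof (intro exI allI impI)
    fix m X assume "qhomog w R m X"
    then obtain p where "whomog w m p" "X = cls R p" unfolding qhomog_def by blast
    then show "qhomog w R (m + s) (qd R F X)"
      unfolding qhomog_def using h qc by blast
  qed
  show "\<exists>X\<in>quot R. qd R F X \<noteq> cls R 0"
  proof (intro bexI)
    show "qd R F (cls R (xv j)) \<noteq> cls R 0" using j by (simp add: qc cls_eq)
  qed (rule cls_quot)
qed

theorem lemma8:
  fixes w :: "'n::{finite, linorder} \<Rightarrow> real"
    and R :: "('n, 'k::field_char_0) mpoly"
  assumes "alg_closed TYPE('k)"
    and "pos_weights w"
    and "R \<notin> range const"
    and "irreducible R"
    and "\<exists>e. whomog w e R"
    and "\<exists>D. is_derivation D \<and> locally_nilpotent D \<and> D \<noteq> (\<lambda>_. 0) \<and> D R = 0"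
  shows "\<exists>d. is_qderivation R d \<and> q_locally_nilpotent R d \<and> q_whomog_derivation w R d
             \<and> (\<exists>X\<in>quot R. d X \<noteq> cls R 0)"
proof -
  note pw = assms(2)
  obtain D where d: "is_derivation D" and l: "locally_nilpotent D" and D0: "D \<noteq> (\<lambda>_. 0)" and DR: "D R = 0"
    using assms(6) by blast
  obtain e where hR: "whomog w e R" using assms(5) by blast
  have R0: "R \<noteq> 0" using assms(3) const_0 by (metis rangeI)
  have "\<exists>k\<in>Poly_Mapping.keys R. k \<noteq> 0"
  proof (rule ccontr)
    assume "\<not> ?thesis"
    then have ks: "Poly_Mapping.keys R \<subseteq> {0}" by blast
    have "R = (\<Sum>m\<in>Poly_Mapping.keys R. Poly_Mapping.single m (Poly_Mapping.lookup R m))"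
      by (rule poly_expand)
    also have "\<dots> = (\<Sum>m\<in>{0}. Poly_Mapping.single m (Poly_Mapping.lookup R m))"
      by (rule sum.mono_neutral_left) (use ks in \<open>auto simp: in_keys_iff\<close>)
    also have "\<dots> = const (Poly_Mapping.lookup R 0)" by (simp add: const_def)
    finally show False using assms(3) by blast
  qed
  then obtain k0 where k0: "k0 \<in> Poly_Mapping.keys R" "k0 \<noteq> 0" by blast
  have e0: "e > 0" using hR k0 wdeg_pos[OF pw k0(2)] by (auto simp: whomog_def)
  have "\<exists>i. D (xv i) \<noteq> 0"
  proof (rule ccontr)
    assume "\<not> ?thesis"
    then have "\<And>i. (0::('n,'k) mpoly) dvd D (xv i)" by simp
    then have "\<And>p. D p = 0" using der_dvd[OF d] by (metis dvd_0_left)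
    then show False using D0 by auto
  qed
  then obtain i0 where i0: "D (xv i0) \<noteq> 0" by blast
  define S where "S = (\<Union>i. (\<lambda>k. wdeg w k - w i) ` Poly_Mapping.keys (D (xv i)))"
  have fS: "finite S" unfolding S_def by simp
  have neS: "S \<noteq> {}" unfolding S_def using i0 by fastforce
  define r where "r = Max S"
  have v: "wdeg w k \<le> w i + r" if "k \<in> Poly_Mapping.keys (D (xv i))" for i k
  proof -
    have "wdeg w k - w i \<in> S" unfolding S_def using that by blast
    then have "wdeg w k - w i \<le> r" unfolding r_def using fS by simp
    then show ?thesis by simp
  qed
  have "r \<in> S" unfolding r_def using fS neS by simp
  then obtain i k where ik: "k \<in> Poly_Mapping.keys (D (xv i))" "r = wdeg w k - w i"
    unfolding S_def by blast
  have "Dh w r D (xv i) = wcomp w (w i + r) (D (xv i))" by (rule Dh_hom[OF d whomog_xv])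
  then have "Poly_Mapping.lookup (Dh w r D (xv i)) k \<noteq> 0"
    using ik by (simp add: lookup_comp in_keys_iff)
  then have Dhi: "Dh w r D (xv i) \<noteq> 0" by auto
  have g: "good w R (Dh w r D) r"
    unfolding good_def
    using Dh_der[OF d] Dh_lnd[OF d l v] Dh_R[OF d DR hR] Dh_whomog[OF d] by blast
  obtain n where n: "w i + r < real n * e" using ex_less_of_nat_mult[OF e0] by blast
  obtain F s where gF: "good w R F s" and j: "\<exists>j. \<not> R dvd F (xv j)"
    using descent[OF R0 hR pw e0 g Dhi n] by blast
  then obtain j where j: "\<not> R dvd F (xv j)" by blast
  from gF have "is_derivation F" "locally_nilpotent F" "F R = 0"
    "\<And>d p. whomog w d p \<Longrightarrow> whomog w (d + s) (F p)" unfolding good_def by auto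
  from qd_good[OF this j] show ?thesis by blast
qed

end
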